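(* For complex parameters $\nu,\mu$ such that all terms are defined, and complex $x$, $$e^{-x}\sum_{n\ge0}\frac{(-x)^n}{(\mu)_n}\left\{L_n^{(\nu)}(x)-\frac{x}{\nu+2}L_n^{(\nu+1)}(x)\right\}={}_3F_3\!\left[\begin{matrix}\nu+3,\ \frac{\mu}{2}+\frac{\nu}{2}+1,\ \frac{\mu}{2}+\frac{\nu}{2}+\frac12\\ \nu+2,\ \mu,\ \mu+\nu+1\end{matrix};-4x\right]+\frac{2x}{\mu}\,{}_3F_3\!\left[\begin{matrix}\nu+3,\ \frac{\mu}{2}+\frac{\nu}{2}+1,\ \frac{\mu}{2}+\frac{\nu}{2}+\frac32\\ \nu+2,\ \mu+1,\ \mu+\nu+2\end{matrix};-4x\right]$$ $$+\frac{x^2}{\mu(\mu+1)}\,{}_3F_3\!\left[\begin{matrix}\nu+3,\ \frac{\mu}{2}+\frac{\nu}{2}+2,\ \frac{\mu}{2}+\frac{\nu}{2}+\frac32\\ \nu+2,\ \mu+2,\ \mu+\nu+3\end{matrix};-4x\right].$$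
   Context: $(a)_k=a(a+1)\cdots(a+k-1)$ is the Pochhammer symbol; ${}_3F_3\!\left[\begin{matrix}a_1,a_2,a_3\\ b_1,b_2,b_3\end{matrix};z\right]=\sum_{k\ge0}\frac{(a_1)_k(a_2)_k(a_3)_k}{(b_1)_k(b_2)_k(b_3)_k}\frac{z^k}{k!}$. $L_n^{(\alpha)}(x)=\frac{(\alpha+1)_n}{n!}\sum_{k=0}^n\frac{(-n)_k}{(\alpha+1)_k}\frac{x^k}{k!}$ is the generalized Laguerre polynomial. *)

theory Defs
  imports "HOL-Analysis.Analysis"
begin

definition hyp3F3 :: "complex \<Rightarrow> complex \<Rightarrow> complex \<Rightarrow> complex \<Rightarrow> complex \<Rightarrow> complex \<Rightarrow> complex \<Rightarrow> complex" where
  "hyp3F3 a1 a2 a3 b1 b2 b3 z =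
     (\<Sum>k. (pochhammer a1 k * pochhammer a2 k * pochhammer a3 k) /
           (pochhammer b1 k * pochhammer b2 k * pochhammer b3 k) * z ^ k / fact k)"

definition laguerre :: "nat \<Rightarrow> complex \<Rightarrow> complex \<Rightarrow> complex" where
  "laguerre n \<alpha> x =
     pochhammer (\<alpha> + 1) n / fact n *
       (\<Sum>k\<le>n. pochhammer (- of_nat n) k / pochhammer (\<alpha> + 1) k * x ^ k / fact k)"

end

theory Submission
  imports Defs
begin


lemma pascal_sum:
  fixes f :: "nat \<Rightarrow> 'a::comm_ring_1"
  shows "(\<Sum>k\<le>Suc m. of_nat (Suc m choose k) * f k) =
         (\<Sum>k\<le>m. of_nat (m choose k) * f k) + (\<Sum>k\<le>m. of_nat (m choose k) * f (Suc k))"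
proof -
  have e1: "(\<Sum>k\<le>Suc m. of_nat (Suc m choose k) * f k) = f 0 + (\<Sum>k\<le>m. of_nat (m choose k) * f (Suc k)) + (\<Sum>k\<le>m. of_nat (m choose Suc k) * f (Suc k))"
  proof -
    have "(\<Sum>k\<le>Suc m. of_nat (Suc m choose k) * f k) = f 0 + (\<Sum>k\<le>m. of_nat (Suc m choose Suc k) * f (Suc k))"
      by (subst sum.atMost_Suc_shift) simp
    also have "\<dots> = f 0 + (\<Sum>k\<le>m. of_nat (m choose k) * f (Suc k)) + (\<Sum>k\<le>m. of_nat (m choose Suc k) * f (Suc k))"
      by (simp only: binomial_Suc_Suc of_nat_add distrib_right sum.distrib add.assoc)
    finally show ?thesis .
  qed
  have e2: "f 0 + (\<Sum>k\<le>m. of_nat (m choose Suc k) * f (Suc k)) = (\<Sum>k\<le>m. of_nat (m choose k) * f k)"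
  proof -
    have "(\<Sum>k\<le>Suc m. of_nat (m choose k) * f k) = (\<Sum>k\<le>m. of_nat (m choose k) * f k)" by (simp add: binomial_eq_0)
    moreover have "(\<Sum>k\<le>Suc m. of_nat (m choose k) * f k) = f 0 + (\<Sum>k\<le>m. of_nat (m choose Suc k) * f (Suc k))"
      by (subst sum.atMost_Suc_shift) simp
    ultimately show ?thesis by simp
  qed
  show ?thesis using e1 e2 by (simp add: algebra_simps)
qed

lemma CV:
  fixes b c :: complex
  assumes "\<And>j. j < m \<Longrightarrow> c + of_nat j \<noteq> 0"
  shows "(\<Sum>k\<le>m. of_nat (m choose k) * ((-1)^k * pochhammer b k / pochhammer c k))
         = pochhammer (c - b) m / pochhammer c m"
  using assms
proof (induction m arbitrary: b c)
  case 0
  then show ?case by simp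
next
  case (Suc m)
  have c0: "c \<noteq> 0" using Suc.prems[of 0] by simp
  have IH: "(\<Sum>k\<le>m. of_nat (m choose k) * ((-1)^k * pochhammer (b+1) k / pochhammer (c+1) k))
         = pochhammer (c - b) m / pochhammer (c+1) m"
    using Suc.IH[of "c+1" "b+1"] Suc.prems[of "Suc _"] by (simp add: algebra_simps)
  have IH0: "(\<Sum>k\<le>m. of_nat (m choose k) * ((-1)^k * pochhammer b k / pochhammer c k))
         = pochhammer (c - b) m / pochhammer c m"
    using Suc.IH[of c b] Suc.prems by simp
  have pc1: "pochhammer (c+1) m \<noteq> 0"
  proof -
    have "\<And>k. k < m \<Longrightarrow> c + 1 \<noteq> - of_nat k"
    proof -
      fix k assume "k < m"
      then have "c + of_nat (Suc k) \<noteq> 0" using Suc.prems[of "Suc k"] by simp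
      then show "c + 1 \<noteq> - of_nat k" by (simp add: eq_neg_iff_add_eq_0 algebra_simps)
    qed
    then show ?thesis by (auto simp: pochhammer_eq_0_iff algebra_simps)
  qed
  have cm: "c + of_nat m \<noteq> 0" using Suc.prems[of m] by simp
  have sh: "\<And>k. (-1)^(Suc k) * pochhammer b (Suc k) / pochhammer c (Suc k)
      = - (b / c) * ((-1)^k * pochhammer (b+1) k / pochhammer (c+1) k)"
    by (simp add: pochhammer_rec)
  have "(\<Sum>k\<le>Suc m. of_nat (Suc m choose k) * ((-1)^k * pochhammer b k / pochhammer c k))
     = pochhammer (c - b) m / pochhammer c m - (b/c) * (pochhammer (c - b) m / pochhammer (c+1) m)"
  proof -
    have A: "(\<Sum>k\<le>m. of_nat (m choose k) * ((-1)^(Suc k) * pochhammer b (Suc k) / pochhammer c (Suc k)))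
       = - (b/c) * (\<Sum>k\<le>m. of_nat (m choose k) * ((-1)^k * pochhammer (b+1) k / pochhammer (c+1) k))"
      by (simp only: sh sum_distrib_left) (simp add: algebra_simps)
    show ?thesis
      using pascal_sum[where f="\<lambda>k. (-1)^k * pochhammer b k / pochhammer c k" and m=m]
      unfolding A IH IH0 by simp
  qed
  also have "\<dots> = pochhammer (c - b) (Suc m) / pochhammer c (Suc m)"
  proof -
    have rel: "c * pochhammer (c+1) m = pochhammer c m * (c + of_nat m)"
      using pochhammer_rec[of c m] pochhammer_rec'[of c m] by (simp add: mult.commute)
    have pc: "pochhammer c m \<noteq> 0" using c0 pc1 rel by auto
    have e1: "pochhammer c (Suc m) = c * pochhammer (c+1) m" by (simp add: pochhammer_rec)
    have e2: "pochhammer (c-b) (Suc m) = pochhammer (c-b) m * (c - b + of_nat m)" by (simp add: pochhammer_rec')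
    have Q: "pochhammer c m = c * pochhammer (c+1) m / (c + of_nat m)" using rel cm by (simp add: field_simps)
    show ?thesis unfolding e1 e2 Q using c0 pc1 cm
      by (simp add: field_simps)
  qed
  finally show ?case .
qed



lemma poch_ne0:
  fixes \<alpha> :: complex
  assumes "\<And>k::nat. \<alpha> \<noteq> - of_nat (k + 1)"
  shows "pochhammer (\<alpha> + 1) k \<noteq> 0"
  using assms by (auto simp: pochhammer_eq_0_iff eq_neg_iff_add_eq_0 algebra_simps)

lemma sum_ext_zero:
  fixes h :: "nat \<Rightarrow> complex"
  assumes "\<And>k. k > n \<Longrightarrow> h k = 0" "\<And>k. k > i \<Longrightarrow> h k = 0"
  shows "(\<Sum>k\<le>n. h k) = (\<Sum>k\<le>i. h k)"
proof -
  have "(\<Sum>k\<le>n. h k) = (\<Sum>k\<le>n+i. h k)"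
    by (rule sum.mono_neutral_left) (use assms in auto)
  also have "\<dots> = (\<Sum>k\<le>i. h k)"
    by (rule sum.mono_neutral_right) (use assms in auto)
  finally show ?thesis .
qed

lemma kummer_coeff:
  fixes \<alpha> x :: complex
  assumes al: "\<And>k::nat. \<alpha> \<noteq> - of_nat (k + 1)"
  shows "(\<Sum>k\<le>n. (if k \<le> i then (pochhammer (\<alpha>+1) n / fact n * (pochhammer (- of_nat n) k / pochhammer (\<alpha>+1) k * x^k / fact k)) * ((-x)^(i-k) / fact (i-k)) else 0))
   = (-1)^i * pochhammer (\<alpha>+1+ of_nat i) n / (fact n * fact i) * x^i"
proof -
  define h where "h k = of_nat (i choose k) * ((-1)^k * pochhammer (- of_nat n) k / pochhammer (\<alpha>+1) k)" for k
  define C where "C = (-1)^i * x^i / fact i * (pochhammer (\<alpha>+1) n / fact n)"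
  have trm: "(if k \<le> i then (pochhammer (\<alpha>+1) n / fact n * (pochhammer (- of_nat n) k / pochhammer (\<alpha>+1) k * x^k / fact k)) * ((-x)^(i-k) / fact (i-k)) else 0)
      = C * h k" for k
  proof (cases "k \<le> i")
    case True
    then obtain j where ij: "i = k + j" using le_Suc_ex by blast
    have f: "fact (k+j) = of_nat (i choose k) * fact k * (fact j :: complex)"
    proof -
      have "fact k * fact j * (i choose k) = fact (k+j)" using binomial_fact_lemma[of k "k+j"] ij by simp
      then have "(fact (k+j)::complex) = of_nat (fact k * fact j * (i choose k))" by (metis of_nat_fact)
      then show ?thesis by (simp add: mult_ac)
    qed
    have C0: "of_nat (i choose k) \<noteq> (0::complex)" using True by simp
    have s0: "(-1::complex)^k * (-1)^k = 1" by (simp flip: power_mult_distrib)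
    have s: "((-1::complex)^(k+j))*(-1)^k = (-1)^j"
      by (simp only: power_add mult.assoc s0 mult.commute[of "(-1)^j"]) simp
    have "C * h k = (-1)^(k+j) * (-1)^k * x^k * x^j * (pochhammer (\<alpha>+1) n * pochhammer (- of_nat n) k)
           / (fact n * (fact k * fact j) * pochhammer (\<alpha>+1) k)"
      unfolding h_def C_def ij f using C0 by (simp only: power_add) (simp add: divide_simps)
    also have "\<dots> = (-1)^j * x^k * x^j * (pochhammer (\<alpha>+1) n * pochhammer (- of_nat n) k)
           / (fact n * (fact k * fact j) * pochhammer (\<alpha>+1) k)"
      by (simp only: s)
    also have "\<dots> = (pochhammer (\<alpha>+1) n / fact n * (pochhammer (- of_nat n) k / pochhammer (\<alpha>+1) k * x^k / fact k)) * ((-x)^(i-k) / fact (i-k))"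
      unfolding ij by (simp add: power_minus[of x] mult_ac)
    finally show ?thesis using True by simp
  next
    case False
    then show ?thesis by (simp add: h_def)
  qed
  have "(\<Sum>k\<le>n. h k) = (\<Sum>k\<le>i. h k)"
  proof (rule sum_ext_zero)
    show "h k = 0" if "k > n" for k using that by (simp add: h_def pochhammer_of_nat_eq_0_lemma)
    show "h k = 0" if "k > i" for k using that by (simp add: h_def)
  qed
  also have "\<dots> = pochhammer (\<alpha> + 1 - (- of_nat n)) i / pochhammer (\<alpha>+1) i"
    unfolding h_def
    by (rule CV) (use al in \<open>auto simp: eq_neg_iff_add_eq_0 algebra_simps\<close>)
  finally have hs: "(\<Sum>k\<le>n. h k) = pochhammer (\<alpha> + 1 + of_nat n) i / pochhammer (\<alpha>+1) i" by simp
  have pp: "pochhammer (\<alpha>+1) n * pochhammer (\<alpha> + 1 + of_nat n) i = pochhammer (\<alpha>+1) i * pochhammer (\<alpha>+1+ of_nat i) n"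
    using pochhammer_product'[of "\<alpha>+1" n i] pochhammer_product'[of "\<alpha>+1" i n] by (simp add: add.commute)
  show ?thesis
    unfolding trm sum_distrib_left[symmetric] hs C_def
    using poch_ne0[OF al, of i] pp
    by (simp add: field_simps)
qed



lemma exp_series_c: "(\<lambda>j. (-x)^j / fact j) sums exp (-x :: complex)"
proof -
  have "(\<lambda>j. (-x)^j /\<^sub>R fact j) sums exp (-x)" by (rule exp_converges)
  then show ?thesis by (simp add: scaleR_conv_of_real divide_inverse mult.commute)
qed

lemma kummer:
  fixes \<alpha> x :: complex
  assumes al: "\<And>k::nat. \<alpha> \<noteq> - of_nat (k + 1)"
  shows "(\<lambda>i. (-1)^i * pochhammer (\<alpha>+1+ of_nat i) n / (fact n * fact i) * x^i) sums (exp (-x) * laguerre n \<alpha> x)"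
proof -
  define c where "c k = pochhammer (\<alpha>+1) n / fact n * (pochhammer (- of_nat n) k / pochhammer (\<alpha>+1) k * x^k / fact k)" for k
  define g where "g k i = (if k \<le> i then c k * ((-x)^(i-k) / fact (i-k)) else 0)" for k i
  have L: "laguerre n \<alpha> x = (\<Sum>k\<le>n. c k)"
    unfolding laguerre_def c_def by (simp add: sum_distrib_left)
  have gs: "g k sums (c k * exp (-x))" for k
  proof -
    have "(\<lambda>j. c k * ((-x)^j / fact j)) sums (c k * exp (-x))"
      by (rule sums_mult[OF exp_series_c])
    moreover have "(\<lambda>i. g k (i + k)) = (\<lambda>j. c k * ((-x)^j / fact j))"
      by (simp add: g_def)
    moreover have "(\<Sum>i<k. g k i) = 0" by (simp add: g_def)
    ultimately show ?thesis using sums_iff_shift[of "g k" k "c k * exp (-x)"] by simp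
  qed
  have "(\<lambda>i. \<Sum>k\<in>{..n}. g k i) sums (\<Sum>k\<in>{..n}. c k * exp (-x))"
    by (rule sums_sum) (rule gs)
  moreover have "(\<Sum>k\<in>{..n}. c k * exp (-x)) = exp (-x) * laguerre n \<alpha> x"
    by (simp add: L sum_distrib_left mult.commute)
  moreover have "(\<Sum>k\<in>{..n}. g k i) = (-1)^i * pochhammer (\<alpha>+1+ of_nat i) n / (fact n * fact i) * x^i" for i
    unfolding g_def c_def by (rule kummer_coeff[OF al])
  ultimately show ?thesis by simp
qed



lemma norm_poch_le:
  fixes z :: complex and r :: real
  assumes "norm z \<le> r"
  shows "norm (pochhammer z n) \<le> pochhammer r n"
proof -
  have "norm (pochhammer z n) = (\<Prod>i\<in>{0..<n}. norm (z + of_nat i))"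
    by (simp add: pochhammer_prod prod_norm)
  also have "\<dots> \<le> (\<Prod>i\<in>{0..<n}. r + of_nat i)"
  proof (rule prod_mono)
    fix i assume "i \<in> {0..<n}"
    have "norm (z + of_nat i) \<le> norm z + norm (of_nat i :: complex)" by (rule norm_triangle_ineq)
    then show "0 \<le> norm (z + of_nat i) \<and> norm (z + of_nat i) \<le> r + of_nat i"
      using assms by simp
  qed
  finally show ?thesis by (simp add: pochhammer_prod)
qed

lemma poch_nat_bound:
  "pochhammer (real m) n \<le> fact n * 2 ^ (m + n)"
proof (cases m)
  case 0
  then show ?thesis by (cases n) (auto simp: pochhammer_0_left)
next
  case (Suc m')
  have "pochhammer (real m) n / fact n = (real (m' + n) gchoose n)"
    by (simp add: gbinomial_pochhammer' Suc algebra_simps)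
  also have "\<dots> = real ((m' + n) choose n)" by (simp add: binomial_gbinomial)
  also have "\<dots> \<le> 2 ^ (m' + n)" using binomial_le_pow2[of "m'+n" n] by (simp flip: of_nat_power)
  also have "\<dots> \<le> 2 ^ (m + n)" by (simp add: Suc)
  finally show ?thesis by (simp add: divide_le_eq mult.commute)
qed

lemma ratio_summable:
  fixes \<mu> :: complex and y :: real
  assumes mu: "\<And>k::nat. \<mu> \<noteq> - of_nat k" and y: "y \<ge> 0"
  shows "summable (\<lambda>n. y ^ n / norm (pochhammer \<mu> n))"
proof (rule summable_ratio_test[where c="1/2" and N="nat \<lceil>norm \<mu> + 2 * y\<rceil>"])
  fix n assume n: "n \<ge> nat \<lceil>norm \<mu> + 2 * y\<rceil>"
  have nz: "\<mu> + of_nat n \<noteq> 0" using mu[of n] by (simp add: eq_neg_iff_add_eq_0)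
  have "real n - norm \<mu> \<le> norm (\<mu> + of_nat n)"
    using norm_triangle_ineq2[of "of_nat n" "- \<mu>"] by (simp add: add.commute norm_minus_commute)
  moreover have "real n \<ge> norm \<mu> + 2 * y" using n by linarith
  ultimately have big: "2 * y \<le> norm (\<mu> + of_nat n)" by linarith
  have pos: "norm (\<mu> + of_nat n) > 0" using nz by simp
  have "norm (y ^ Suc n / norm (pochhammer \<mu> (Suc n)))
        = (y ^ n / norm (pochhammer \<mu> n)) * (y / norm (\<mu> + of_nat n))"
    using y by (simp add: pochhammer_rec' norm_mult mult_ac)
  also have "\<dots> \<le> (y ^ n / norm (pochhammer \<mu> n)) * (1/2)"
    using big pos y by (intro mult_left_mono) (auto simp: field_simps)
  also have "\<dots> = 1/2 * norm (y ^ n / norm (pochhammer \<mu> n))" using y by simp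
  finally show "norm (y ^ Suc n / norm (pochhammer \<mu> (Suc n))) \<le> 1/2 * norm (y ^ n / norm (pochhammer \<mu> n))" .
qed simp



lemma antidiag:
  fixes \<alpha> \<mu> x :: complex
  assumes mu: "\<And>k::nat. \<mu> \<noteq> - of_nat k"
  shows "(\<Sum>n\<le>m. (-x)^n / pochhammer \<mu> n * ((-1)^(m-n) * pochhammer (\<alpha>+1+ of_nat (m-n)) n / (fact n * fact (m-n)) * x^(m-n)))
     = (-x)^m * pochhammer (\<mu>+\<alpha>+ of_nat m) m / (pochhammer \<mu> m * fact m)"
proof -
  have t: "(-x)^n / pochhammer \<mu> n * ((-1)^(m-n) * pochhammer (\<alpha>+1+ of_nat (m-n)) n / (fact n * fact (m-n)) * x^(m-n))
     = (-x)^m / fact m * (of_nat (m choose n) * ((-1)^n * pochhammer (-(\<alpha> + of_nat m)) n / pochhammer \<mu> n))"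
    if n: "n \<le> m" for n
  proof -
    have p: "pochhammer (\<alpha>+1+ of_nat (m-n)) n = (-1)^n * pochhammer (-(\<alpha> + of_nat m)) n"
    proof -
      have "\<alpha>+1+ of_nat (m-n) = \<alpha> + of_nat m - of_nat n + 1" using n by (simp add: of_nat_diff)
      then show ?thesis by (simp only: pochhammer_minus')
    qed
    have xp: "(-x)^n * ((-1)^(m-n) * x^(m-n)) = (-x)^m"
    proof -
      have "(-1)^(m-n) * x^(m-n) = (-x)^(m-n)" by (rule power_minus[symmetric])
      moreover have "(-x)^n * (-x)^(m-n) = (-x)^m" using n by (simp flip: power_add)
      ultimately show ?thesis by simp
    qed
    have f: "(fact m :: complex) = of_nat (m choose n) * fact n * fact (m-n)"
    proof -
      have "fact n * fact (m-n) * (m choose n) = fact m" using binomial_fact_lemma[OF n] by simp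
      then have "(fact m::complex) = of_nat (fact n * fact (m-n) * (m choose n))" by (metis of_nat_fact)
      then show ?thesis by (simp add: mult_ac)
    qed
    have C0: "of_nat (m choose n) \<noteq> (0::complex)" using n by simp
    have s: "(-1::complex)^n * (-1)^n = 1" by (simp flip: power_mult_distrib)
    have L: "(-x)^n / pochhammer \<mu> n * ((-1)^(m-n) * ((-1)^n * pochhammer (-(\<alpha> + of_nat m)) n) / (fact n * fact (m-n)) * x^(m-n))
       = ((-x)^n * ((-1)^(m-n) * x^(m-n))) * ((-1)^n * pochhammer (-(\<alpha> + of_nat m)) n) / (pochhammer \<mu> n * (fact n * fact (m-n)))"
      by (simp add: mult_ac)
    have R: "(-x)^m / (of_nat (m choose n) * fact n * fact (m-n)) * (of_nat (m choose n) * ((-1)^n * pochhammer (-(\<alpha> + of_nat m)) n / pochhammer \<mu> n))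
       = (-x)^m * ((-1)^n * pochhammer (-(\<alpha> + of_nat m)) n) / (pochhammer \<mu> n * (fact n * fact (m-n)))"
      using C0 by (simp add: mult_ac)
    show ?thesis unfolding p f L R xp ..
  qed
  have "(\<Sum>n\<le>m. (-x)^n / pochhammer \<mu> n * ((-1)^(m-n) * pochhammer (\<alpha>+1+ of_nat (m-n)) n / (fact n * fact (m-n)) * x^(m-n)))
      = (-x)^m / fact m * (\<Sum>n\<le>m. of_nat (m choose n) * ((-1)^n * pochhammer (-(\<alpha> + of_nat m)) n / pochhammer \<mu> n))"
    unfolding sum_distrib_left by (rule sum.cong[OF refl], rule t, simp)
  also have "(\<Sum>n\<le>m. of_nat (m choose n) * ((-1)^n * pochhammer (-(\<alpha> + of_nat m)) n / pochhammer \<mu> n))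
      = pochhammer (\<mu> - (-(\<alpha> + of_nat m))) m / pochhammer \<mu> m"
    by (rule CV) (use mu in \<open>auto simp: eq_neg_iff_add_eq_0\<close>)
  also have "\<mu> - (-(\<alpha> + of_nat m)) = \<mu>+\<alpha>+ of_nat m" by simp
  finally show ?thesis by (simp add: mult.commute)
qed



lemma exp_real_summable: "summable (\<lambda>i. (z::real)^i / fact i)"
proof -
  have "(\<lambda>i. z^i /\<^sub>R fact i) sums exp z" by (rule exp_converges)
  then show ?thesis by (simp add: sums_summable divide_inverse mult.commute)
qed

lemma T_bound:
  fixes \<alpha> \<mu> x :: complex and N :: nat
  assumes N: "norm (\<alpha> + 1) \<le> real N"
  shows "norm ((-x)^n / pochhammer \<mu> n * ((-1)^i * pochhammer (\<alpha>+1+ of_nat i) n / (fact n * fact i) * x^i))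
    \<le> 2^N * ((2 * norm x)^n / norm (pochhammer \<mu> n)) * ((2 * norm x)^i / fact i)"
proof -
  have "norm (\<alpha>+1+ of_nat i) \<le> real (N + i)"
    using norm_triangle_ineq[of "\<alpha>+1" "of_nat i"] N by simp
  then have "norm (pochhammer (\<alpha>+1+ of_nat i) n) \<le> pochhammer (real (N+i)) n"
    by (rule norm_poch_le)
  also have "\<dots> \<le> fact n * 2 ^ (N + i + n)" by (rule poch_nat_bound)
  finally have pb: "norm (pochhammer (\<alpha>+1+ of_nat i) n) \<le> fact n * 2 ^ (N + i + n)" .
  have "norm ((-x)^n / pochhammer \<mu> n * ((-1)^i * pochhammer (\<alpha>+1+ of_nat i) n / (fact n * fact i) * x^i))
      = norm x ^ n / norm (pochhammer \<mu> n) * (norm (pochhammer (\<alpha>+1+ of_nat i) n) / (fact n * fact i) * norm x ^ i)"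
    by (simp add: norm_mult norm_divide norm_power)
  also have "\<dots> \<le> norm x ^ n / norm (pochhammer \<mu> n) * ((fact n * 2 ^ (N + i + n)) / (fact n * fact i) * norm x ^ i)"
    by (intro mult_left_mono mult_right_mono divide_right_mono pb) auto
  also have "\<dots> = 2^N * ((2 * norm x)^n / norm (pochhammer \<mu> n)) * ((2 * norm x)^i / fact i)"
    by (simp add: power_add power_mult_distrib field_simps)
  finally show ?thesis .
qed

lemma prod_abs_summable:
  fixes a b :: "nat \<Rightarrow> real"
  assumes a: "summable a" "\<And>n. a n \<ge> 0" and b: "summable b" "\<And>n. b n \<ge> 0"
  shows "(\<lambda>p. norm ((\<lambda>(n,i). a n * b i) p)) summable_on (UNIV \<times> UNIV)"
proof -
  have bs: "b summable_on UNIV" using b summable_on_UNIV_nonneg_real_iff by blast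
  have "(\<lambda>p. norm (a (fst p) * b (snd p))) summable_on Sigma UNIV (\<lambda>_. UNIV)"
  proof (rule Infinite_Sum.abs_summable_on_Sigma_iff[THEN iffD2], intro conjI ballI)
    fix n :: nat
    show "(\<lambda>i. norm (a (fst (n, i)) * b (snd (n, i)))) summable_on UNIV"
      using summable_on_cmult_right[OF bs, of "a n"] a b by (simp add: abs_mult)
  next
    have eq: "\<And>n. infsum (\<lambda>i. norm (a (fst (n, i)) * b (snd (n, i)))) UNIV = a n * infsum b UNIV"
      using a b by (simp add: abs_mult infsum_cmult_right')
    moreover have "(\<lambda>n. norm (a n * infsum b UNIV)) summable_on UNIV"
    proof -
      have "summable (\<lambda>n. norm (a n * infsum b UNIV))"
        using summable_mult2[OF a(1), of "infsum b UNIV"] a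
        by (simp add: abs_mult infsum_nonneg b(2))
      then show ?thesis
        using summable_on_UNIV_nonneg_real_iff[of "\<lambda>n. norm (a n * infsum b UNIV)"] by simp
    qed
    ultimately show "(\<lambda>n. norm (\<Sum>\<^sub>\<infinity>i. norm (a (fst (n, i)) * b (snd (n, i))))) summable_on UNIV"
      by (simp only: eq)
  qed
  then show ?thesis by (simp add: case_prod_beta)
qed



lemma double_series:
  fixes \<alpha> \<mu> x :: complex
  assumes al: "\<And>k::nat. \<alpha> \<noteq> - of_nat (k + 1)"
      and mu: "\<And>k::nat. \<mu> \<noteq> - of_nat k"
  shows "\<exists>S. (\<lambda>n. exp (-x) * ((-x)^n / pochhammer \<mu> n * laguerre n \<alpha> x)) sums S
           \<and> (\<lambda>m. (-x)^m * pochhammer (\<mu>+\<alpha>+ of_nat m) m / (pochhammer \<mu> m * fact m)) sums S"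
proof -
  define T where "T = (\<lambda>(n::nat, i::nat). (-x)^n / pochhammer \<mu> n * ((-1)^i * pochhammer (\<alpha>+1+ of_nat i) n / (fact n * fact i) * x^i))"
  obtain N :: nat where N: "norm (\<alpha> + 1) \<le> real N" using real_arch_simple by blast
  define a where "a n = 2^N * ((2 * norm x)^n / norm (pochhammer \<mu> n))" for n
  define b where "b i = (2 * norm x)^i / fact i" for i :: nat
  have asum: "summable a" unfolding a_def
    by (rule summable_mult[OF ratio_summable[OF mu]]) simp
  have bsum: "summable b" unfolding b_def by (rule exp_real_summable)
  have G: "(\<lambda>p. norm ((\<lambda>(n,i). a n * b i) p)) summable_on (UNIV \<times> UNIV)"
    by (rule prod_abs_summable[OF asum _ bsum]) (auto simp: a_def b_def)
  have Tn: "(\<lambda>p. norm (T p)) summable_on (UNIV \<times> UNIV)"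
  proof (rule Infinite_Sum.abs_summable_on_comparison_test[OF G])
    fix p :: "nat \<times> nat" assume "p \<in> UNIV \<times> UNIV"
    obtain n i where p: "p = (n, i)" by (cases p)
    show "norm (T p) \<le> norm ((\<lambda>(n,i). a n * b i) p)"
      unfolding p T_def using T_bound[OF N, of x n \<mu> i]
      by (simp add: a_def b_def mult.assoc)
  qed
  have Ts: "T summable_on (UNIV \<times> UNIV)"
    by (rule abs_summable_summable[OF Tn])
  then obtain S where S: "(T has_sum S) (UNIV \<times> UNIV)"
    using summable_on_def by blast
  have row: "((\<lambda>i. T (n, i)) has_sum (exp (-x) * ((-x)^n / pochhammer \<mu> n * laguerre n \<alpha> x))) UNIV" for n
  proof -
    have rs: "(\<lambda>i. T (n, i)) summable_on UNIV"
      using summable_on_SigmaD1[of "\<lambda>n i. T (n, i)" UNIV "\<lambda>_. UNIV" n] Ts by simp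
    have "(\<lambda>i. (-x)^n / pochhammer \<mu> n * ((-1)^i * pochhammer (\<alpha>+1+ of_nat i) n / (fact n * fact i) * x^i))
          sums ((-x)^n / pochhammer \<mu> n * (exp (-x) * laguerre n \<alpha> x))"
      by (rule sums_mult[OF kummer[OF al]])
    then have "(\<lambda>i. T (n, i)) sums (exp (-x) * ((-x)^n / pochhammer \<mu> n * laguerre n \<alpha> x))"
      by (simp add: T_def mult_ac)
    moreover have "(\<lambda>i. T (n, i)) sums (infsum (\<lambda>i. T (n, i)) UNIV)"
      using has_sum_imp_sums[OF has_sum_infsum[OF rs]] .
    ultimately show ?thesis using has_sum_infsum[OF rs] sums_unique2 by metis
  qed
  have s1: "((\<lambda>n. exp (-x) * ((-x)^n / pochhammer \<mu> n * laguerre n \<alpha> x)) has_sum S) UNIV"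
    by (rule has_sum_SigmaD[OF S]) (rule row)
  define g where "g = (\<lambda>(m::nat, n::nat). (n, m - n))"
  have bij: "bij_betw g (SIGMA m:UNIV. {..m}) (UNIV \<times> UNIV)"
    by (rule bij_betw_byWitness[where f'="\<lambda>(n, i). (n + i, n)"]) (auto simp: g_def)
  have S2: "((\<lambda>p. T (g p)) has_sum S) (SIGMA m:UNIV. {..m})"
    using has_sum_reindex_bij_betw[OF bij] S by blast
  have s2: "((\<lambda>m. \<Sum>n\<le>m. T (g (m, n))) has_sum S) UNIV"
    by (rule has_sum_SigmaD[OF S2]) simp
  have "(\<Sum>n\<le>m. T (g (m, n))) = (-x)^m * pochhammer (\<mu>+\<alpha>+ of_nat m) m / (pochhammer \<mu> m * fact m)" for m
    unfolding g_def T_def using antidiag[OF mu, of x m \<alpha>] by simp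
  then have "(\<lambda>m. (-x)^m * pochhammer (\<mu>+\<alpha>+ of_nat m) m / (pochhammer \<mu> m * fact m)) sums S"
    using has_sum_imp_sums[OF s2] by simp
  then show ?thesis using has_sum_imp_sums[OF s1] by blast
qed



lemma nice:
  fixes w p q aa bb bc x :: complex
  assumes "p = w/2" "q = w/2 + 1/2"
  shows "pochhammer aa k * pochhammer p k * pochhammer q k / (pochhammer bb k * pochhammer bc k * pochhammer w k) * (-4 * x)^k / fact k
       = pochhammer aa k / pochhammer bb k * (pochhammer w (2*k) / (pochhammer bc k * pochhammer w k)) * (-x)^k / fact k"
proof -
  have d: "pochhammer w (2*k) = of_nat (2^(2*k)) * pochhammer p k * pochhammer q k"
    using pochhammer_double[of "w/2" k] unfolding assms by simp
  have f: "(-4 * x)^k = of_nat (2^(2*k)) * (-x)^k"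
  proof -
    have "-4 * x = 4 * (-x)" by simp
    then show ?thesis by (simp only: power_mult_distrib) (simp add: power_mult)
  qed
  have nz: "(of_nat (2^(2*k)) :: complex) \<noteq> 0" by simp
  show ?thesis unfolding d f using nz by (simp add: field_simps)
qed

lemma ratio32:
  fixes \<nu> :: complex
  assumes "\<nu> + 2 + of_nat k \<noteq> 0 \<or> True" "pochhammer (\<nu>+2) k \<noteq> 0" "\<nu> + 2 \<noteq> 0"
  shows "pochhammer (\<nu>+3) k / pochhammer (\<nu>+2) k = (\<nu> + 2 + of_nat k) / (\<nu>+2)"
proof -
  have "pochhammer (\<nu>+2) (Suc k) = (\<nu>+2) * pochhammer (\<nu>+3) k"
    by (simp add: pochhammer_rec add.assoc)
  moreover have "pochhammer (\<nu>+2) (Suc k) = pochhammer (\<nu>+2) k * (\<nu>+2+ of_nat k)"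
    by (simp add: pochhammer_rec')
  ultimately show ?thesis using assms by (simp add: field_simps)
qed



lemma quot_le2:
  fixes a b :: complex
  assumes "real k \<ge> norm a + 2 * norm b"
  shows "norm (a + of_nat k) \<le> 2 * norm (b + of_nat k)"
proof -
  have "norm (a + of_nat k) \<le> norm a + real k"
    using norm_triangle_ineq[of a "of_nat k"] by simp
  moreover have "real k - norm b \<le> norm (b + of_nat k)"
    using norm_triangle_ineq2[of "of_nat k" "- b"] by (simp add: add.commute norm_minus_commute)
  ultimately show ?thesis using assms by linarith
qed

lemma hyp_summable:
  fixes a1 a2 a3 b1 b2 b3 z :: complex
  assumes b1: "\<And>k::nat. b1 + of_nat k \<noteq> 0" and b2: "\<And>k::nat. b2 + of_nat k \<noteq> 0"
      and b3: "\<And>k::nat. b3 + of_nat k \<noteq> 0"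
  shows "summable (\<lambda>k. pochhammer a1 k * pochhammer a2 k * pochhammer a3 k /
           (pochhammer b1 k * pochhammer b2 k * pochhammer b3 k) * z ^ k / fact k)"
    (is "summable ?f")
proof (rule summable_ratio_test[where c="1/2" and
      N="nat \<lceil>norm a1 + norm a2 + norm a3 + 2 * (norm b1 + norm b2 + norm b3) + 16 * norm z\<rceil>"])
  fix k assume k: "k \<ge> nat \<lceil>norm a1 + norm a2 + norm a3 + 2 * (norm b1 + norm b2 + norm b3) + 16 * norm z\<rceil>"
  then have kr: "real k \<ge> norm a1 + norm a2 + norm a3 + 2 * (norm b1 + norm b2 + norm b3) + 16 * norm z"
    by linarith
  have pb: "pochhammer b1 k \<noteq> 0" "pochhammer b2 k \<noteq> 0" "pochhammer b3 k \<noteq> 0"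
    using b1 b2 b3 by (auto simp: pochhammer_eq_0_iff eq_neg_iff_add_eq_0)
  define R where "R = (a1 + of_nat k) * (a2 + of_nat k) * (a3 + of_nat k) /
      ((b1 + of_nat k) * (b2 + of_nat k) * (b3 + of_nat k)) * z / of_nat (Suc k)"
  have rec: "?f (Suc k) = ?f k * R"
    unfolding R_def using pb b1[of k] b2[of k] b3[of k]
    by (simp add: pochhammer_rec' field_simps)
  have n1: "norm (a1 + of_nat k) \<le> 2 * norm (b1 + of_nat k)"
    by (rule quot_le2) (use kr in \<open>auto intro: order_trans[rotated]\<close>)
  have n2: "norm (a2 + of_nat k) \<le> 2 * norm (b2 + of_nat k)"
    by (rule quot_le2) (use kr in \<open>auto intro: order_trans[rotated]\<close>)
  have n3: "norm (a3 + of_nat k) \<le> 2 * norm (b3 + of_nat k)"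
    by (rule quot_le2) (use kr in \<open>auto intro: order_trans[rotated]\<close>)
  define d where "d = norm (b1 + of_nat k) * norm (b2 + of_nat k) * norm (b3 + of_nat k)"
  have dpos: "d > 0" unfolding d_def using b1[of k] b2[of k] b3[of k] by simp
  have num: "norm (a1 + of_nat k) * norm (a2 + of_nat k) * norm (a3 + of_nat k) \<le> 8 * d"
  proof -
    have "norm (a1 + of_nat k) * norm (a2 + of_nat k) * norm (a3 + of_nat k)
        \<le> (2 * norm (b1 + of_nat k)) * (2 * norm (b2 + of_nat k)) * (2 * norm (b3 + of_nat k))"
      by (intro mult_mono n1 n2 n3) auto
    then show ?thesis by (simp add: d_def)
  qed
  have zk: "16 * norm z \<le> real (Suc k)" using kr norm_ge_zero[of a1] norm_ge_zero[of a2] norm_ge_zero[of a3] norm_ge_zero[of b1] norm_ge_zero[of b2] norm_ge_zero[of b3] unfolding of_nat_Suc by argo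
  have "norm R = norm (a1 + of_nat k) * norm (a2 + of_nat k) * norm (a3 + of_nat k) * norm z / (d * real (Suc k))"
    unfolding R_def d_def by (simp add: norm_mult norm_divide norm_of_nat del: of_nat_Suc)
  also have "\<dots> \<le> 8 * d * norm z / (d * real (Suc k))"
    using dpos by (intro divide_right_mono mult_right_mono num) auto
  also have "\<dots> = 8 * norm z / real (Suc k)" using dpos by simp
  also have "\<dots> \<le> 1/2" using zk by (simp add: field_simps)
  finally have "norm R \<le> 1/2" .
  then show "norm (?f (Suc k)) \<le> 1/2 * norm (?f k)"
    unfolding rec norm_mult using mult_left_mono[OF \<open>norm R \<le> 1/2\<close> norm_ge_zero[of "?f k"]]
    by (simp add: mult.commute)
qed simp



lemma shift_sums:
  fixes f :: "nat \<Rightarrow> complex"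
  assumes "f sums s"
  shows "(\<lambda>m. if m = 0 then 0 else f (m - 1)) sums s"
proof -
  let ?g = "\<lambda>m. if m = 0 then 0 else f (m - 1)"
  have "(\<lambda>i. ?g (i + 1)) = f" by simp
  then have "(\<lambda>i. ?g (i + 1)) sums s" using assms by simp
  then show ?thesis using sums_iff_shift[of ?g 1 s] by simp
qed

definition hterm :: "complex \<Rightarrow> complex \<Rightarrow> complex \<Rightarrow> complex \<Rightarrow> complex \<Rightarrow> complex \<Rightarrow> complex \<Rightarrow> nat \<Rightarrow> complex" where
  "hterm a1 a2 a3 b1 b2 b3 z k = pochhammer a1 k * pochhammer a2 k * pochhammer a3 k /
           (pochhammer b1 k * pochhammer b2 k * pochhammer b3 k) * z ^ k / fact k"

lemma hterm_sums:
  assumes b1: "\<And>k::nat. b1 + of_nat k \<noteq> 0" and b2: "\<And>k::nat. b2 + of_nat k \<noteq> 0"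
      and b3: "\<And>k::nat. b3 + of_nat k \<noteq> 0"
  shows "hterm a1 a2 a3 b1 b2 b3 z sums hyp3F3 a1 a2 a3 b1 b2 b3 z"
  unfolding hterm_def hyp3F3_def
  by (rule summable_sums[OF hyp_summable[OF b1 b2 b3]])



lemma poch_nz:
  fixes w :: complex
  assumes "\<And>j::nat. w + of_nat j \<noteq> 0"
  shows "pochhammer w n \<noteq> 0"
  using assms by (auto simp: pochhammer_eq_0_iff eq_neg_iff_add_eq_0)

lemma shift_nz:
  fixes w :: complex
  assumes "\<And>j::nat. w \<noteq> - of_nat j"
  shows "w + of_nat s + of_nat j \<noteq> 0"
proof
  assume "w + of_nat s + of_nat j = 0"
  then have "w = - (of_nat s + of_nat j)" by (simp only: eq_neg_iff_add_eq_0 add.assoc)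
  then have "w = - of_nat (s + j)" by (simp only: of_nat_add)
  with assms show False by blast
qed

lemma gen_case:
  fixes \<mu> \<nu> x :: complex and k :: nat
  assumes mu: "\<And>k::nat. \<mu> \<noteq> - of_nat k"
      and munu: "\<And>k::nat. \<mu> + \<nu> + 1 \<noteq> - of_nat k"
      and nu2: "\<nu> + 2 \<noteq> 0"
  shows "(-x)^(Suc(Suc k)) * pochhammer (\<mu>+\<nu>+ of_nat (Suc(Suc k))) (Suc(Suc k)) / (pochhammer \<mu> (Suc(Suc k)) * fact (Suc(Suc k)))
     - 1/(\<nu>+2) * (x * ((-x)^(Suc k) * pochhammer (\<mu>+(\<nu>+1)+ of_nat (Suc k)) (Suc k) / (pochhammer \<mu> (Suc k) * fact (Suc k))))
   = (\<nu>+2+ of_nat (Suc(Suc k)))/(\<nu>+2) * (pochhammer (\<mu>+\<nu>+1) (2*Suc(Suc k)) / (pochhammer \<mu> (Suc(Suc k)) * pochhammer (\<mu>+\<nu>+1) (Suc(Suc k)))) * (-x)^(Suc(Suc k))/fact (Suc(Suc k))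
     + 2*x/\<mu> * ((\<nu>+2+ of_nat (Suc k))/(\<nu>+2) * (pochhammer (\<mu>+\<nu>+2) (2*Suc k)/(pochhammer (\<mu>+1) (Suc k) * pochhammer (\<mu>+\<nu>+2) (Suc k))) * (-x)^(Suc k)/fact (Suc k))
     + x^2/(\<mu>*(\<mu>+1)) * ((\<nu>+2+ of_nat k)/(\<nu>+2) * (pochhammer (\<mu>+\<nu>+3) (2*k)/(pochhammer (\<mu>+2) k * pochhammer (\<mu>+\<nu>+3) k)) * (-x)^k/fact k)"
proof -
  define c where "c = \<mu> + \<nu>"
  define B where "B = pochhammer (\<mu>+\<nu>+3) k"
  define D where "D = pochhammer (\<mu>+\<nu>+3+ of_nat k) k"
  define M where "M = pochhammer (\<mu>+2) k"
  define X where "X = (-x)^k"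
  define K where "K = (of_nat k :: complex)"
  have F1: "pochhammer (\<mu>+\<nu>+1) (2*Suc(Suc k)) = (c+1)*(c+2)*(B*D)*(c+3+2*K)*(c+4+2*K)"
  proof -
    have e: "2*Suc(Suc k) = 2 + (k + k + 2)" by simp
    have "pochhammer (\<mu>+\<nu>+1) (2*Suc(Suc k)) = pochhammer (\<mu>+\<nu>+1) (2 + (k + k + 2))" by (simp only: e)
    also have "\<dots> = pochhammer (\<mu>+\<nu>+1) 2 * (pochhammer (\<mu>+\<nu>+3) (k+k) * pochhammer (\<mu>+\<nu>+3 + of_nat (k+k)) 2)"
      by (simp only: pochhammer_product') (simp add: algebra_simps)
    also have "pochhammer (\<mu>+\<nu>+3) (k+k) = B * D"
      unfolding B_def D_def by (simp only: pochhammer_product')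
    finally show ?thesis
      by (simp add: c_def K_def pochhammer_rec numeral_2_eq_2 algebra_simps)
  qed
  have F2: "pochhammer (\<mu>+\<nu>+1) (Suc(Suc k)) = (c+1)*(c+2)*B"
    unfolding B_def c_def by (simp add: pochhammer_rec algebra_simps)
  have F3: "pochhammer (\<mu>+\<nu>+2) (2*Suc k) = (c+2)*(B*D)*(c+3+2*K)"
  proof -
    have e: "2*Suc k = 1 + (k + k + 1)" by simp
    have "pochhammer (\<mu>+\<nu>+2) (2*Suc k) = pochhammer (\<mu>+\<nu>+2) (1 + (k + k + 1))" by (simp only: e)
    also have "\<dots> = pochhammer (\<mu>+\<nu>+2) 1 * (pochhammer (\<mu>+\<nu>+3) (k+k) * pochhammer (\<mu>+\<nu>+3 + of_nat (k+k)) 1)"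
      by (simp only: pochhammer_product') (simp add: algebra_simps)
    also have "pochhammer (\<mu>+\<nu>+3) (k+k) = B * D"
      unfolding B_def D_def by (simp only: pochhammer_product')
    finally show ?thesis
      by (simp add: c_def K_def algebra_simps)
  qed
  have F4: "pochhammer (\<mu>+\<nu>+2) (Suc k) = (c+2)*B"
    unfolding B_def c_def by (simp add: pochhammer_rec algebra_simps)
  have F5: "pochhammer (\<mu>+\<nu>+3) (2*k) = B*D"
    unfolding B_def D_def by (simp only: mult_2 pochhammer_product')
  have F7: "pochhammer (\<mu>+\<nu>+ of_nat (Suc(Suc k))) (Suc(Suc k)) = (c+2+K)*D*(c+3+2*K)"
  proof -
    have "pochhammer (\<mu>+\<nu>+ of_nat (Suc(Suc k))) (Suc(Suc k)) = pochhammer (\<mu>+\<nu>+ of_nat (Suc(Suc k))) (1 + k + 1)" by simp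
    also have "\<dots> = pochhammer (\<mu>+\<nu>+ of_nat (Suc(Suc k))) 1 * pochhammer (\<mu>+\<nu>+ of_nat (Suc(Suc k)) + 1) k
                 * pochhammer (\<mu>+\<nu>+ of_nat (Suc(Suc k)) + 1 + of_nat k) 1"
      by (simp only: pochhammer_product') simp
    also have "pochhammer (\<mu>+\<nu>+ of_nat (Suc(Suc k)) + 1) k = D"
      unfolding D_def by (simp add: algebra_simps)
    finally show ?thesis by (simp add: c_def K_def algebra_simps)
  qed
  have F8: "pochhammer (\<mu>+(\<nu>+1)+ of_nat (Suc k)) (Suc k) = (c+2+K)*D"
  proof -
    have "pochhammer (\<mu>+(\<nu>+1)+ of_nat (Suc k)) (Suc k) = (\<mu>+(\<nu>+1)+ of_nat (Suc k)) * pochhammer (\<mu>+(\<nu>+1)+ of_nat (Suc k) + 1) k"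
      by (rule pochhammer_rec)
    also have "pochhammer (\<mu>+(\<nu>+1)+ of_nat (Suc k) + 1) k = D"
      unfolding D_def by (simp add: algebra_simps)
    finally show ?thesis by (simp add: c_def K_def algebra_simps)
  qed
  have P1: "pochhammer \<mu> (Suc(Suc k)) = \<mu>*(\<mu>+1)*M"
    unfolding M_def by (simp add: pochhammer_rec algebra_simps)
  have P2: "pochhammer (\<mu>+1) (Suc k) = (\<mu>+1)*M"
    unfolding M_def by (simp add: pochhammer_rec algebra_simps)
  define U where "U = \<mu>+1+K"
  define A1 where "A1 = K + 1"
  define A2 where "A2 = K + 2"
  have P3: "pochhammer \<mu> (Suc k) = \<mu>*(\<mu>+1)*M/U"
  proof -
    have nz: "\<mu>+1+K \<noteq> 0" using mu[of "Suc k"] by (simp add: K_def eq_neg_iff_add_eq_0 algebra_simps)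
    have "pochhammer \<mu> (Suc (Suc k)) = pochhammer \<mu> (Suc k) * (\<mu>+1+K)"
      by (simp add: pochhammer_rec' K_def algebra_simps)
    then have "pochhammer \<mu> (Suc k) * (\<mu>+1+K) = \<mu>*(\<mu>+1)*M" using P1 by simp
    then show ?thesis using nz by (simp add: eq_divide_eq U_def)
  qed
  have fa1: "(fact (Suc k) :: complex) = A1 * fact k" by (simp add: A1_def K_def algebra_simps)
  have fa2: "(fact (Suc (Suc k)) :: complex) = A2*A1 * fact k" by (simp add: A1_def A2_def K_def algebra_simps)
  have x1: "(-x)^(Suc k) = -(X*x)" by (simp add: X_def)
  have x2: "(-x)^(Suc(Suc k)) = X*x^2" by (simp add: X_def power2_eq_square)
  have K1: "(of_nat (Suc k) :: complex) = A1" "(of_nat (Suc (Suc k)) :: complex) = A2"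
    by (simp_all add: K_def A1_def A2_def)
  have nzm: "\<mu> \<noteq> 0" "\<mu>+1 \<noteq> 0" using mu[of 0] mu[of 1] by (auto simp: eq_neg_iff_add_eq_0)
  have nzM: "M \<noteq> 0" unfolding M_def
    by (rule poch_nz) (use shift_nz[OF mu, of 2] in simp)
  have nzB: "B \<noteq> 0" unfolding B_def
    by (rule poch_nz) (use shift_nz[OF munu, of 2] in \<open>simp add: add.assoc\<close>)
  have nzc: "c+1 \<noteq> 0" "c+2 \<noteq> 0" using munu[of 0] munu[of 1] by (auto simp: c_def eq_neg_iff_add_eq_0 algebra_simps)
  have nzK: "A1 \<noteq> 0" "A2 \<noteq> 0" "U \<noteq> 0"
    using mu[of "Suc k"] of_nat_neq_0[of k, where 'a=complex] of_nat_neq_0[of "Suc k", where 'a=complex]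
    by (auto simp: A1_def A2_def U_def K_def eq_neg_iff_add_eq_0 algebra_simps)
  have nzf: "(fact k :: complex) \<noteq> 0" by simp
  define V1 where "V1 = \<mu> + 1"
  define N2 where "N2 = \<nu> + 2"
  define C1 where "C1 = c + 1"
  define C2 where "C2 = c + 2"
  have nzA: "V1 \<noteq> 0" "N2 \<noteq> 0" "C1 \<noteq> 0" "C2 \<noteq> 0"
    using nzm nu2 nzc by (simp_all add: V1_def N2_def C1_def C2_def add.commute)
  define Q where "Q = X*x^2*D/(\<mu>*(\<mu>+1)*M*fact k*(\<nu>+2))"
  have nzc3: "c+2+K \<noteq> 0 \<or> True" by simp
  have T1: "(-x)^(Suc(Suc k)) * pochhammer (\<mu>+\<nu>+ of_nat (Suc(Suc k))) (Suc(Suc k)) / (pochhammer \<mu> (Suc(Suc k)) * fact (Suc(Suc k)))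
      = Q * ((\<nu>+2)*(c+2+K)*(c+3+2*K)/(A2*A1))"
    unfolding F7 P1 fa2 x2 Q_def
    unfolding V1_def[symmetric] N2_def[symmetric] C1_def[symmetric] C2_def[symmetric] using nzA nzm nzM nzK nzf by (simp add: field_simps)
  have T2: "1/(\<nu>+2) * (x * ((-x)^(Suc k) * pochhammer (\<mu>+(\<nu>+1)+ of_nat (Suc k)) (Suc k) / (pochhammer \<mu> (Suc k) * fact (Suc k))))
      = - (Q * ((c+2+K)*U/A1))"
    unfolding F8 P3 fa1 x1 Q_def
    unfolding V1_def[symmetric] N2_def[symmetric] C1_def[symmetric] C2_def[symmetric] using nzA nzm nzM nzK nzf by (simp add: field_simps power2_eq_square)
  have T3: "(\<nu>+2+ of_nat (Suc(Suc k)))/(\<nu>+2) * (pochhammer (\<mu>+\<nu>+1) (2*Suc(Suc k)) / (pochhammer \<mu> (Suc(Suc k)) * pochhammer (\<mu>+\<nu>+1) (Suc(Suc k)))) * (-x)^(Suc(Suc k))/fact (Suc(Suc k))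
      = Q * (((\<nu>+2)+(K+2))*(c+3+2*K)*(c+4+2*K)/(A2*A1))"
    unfolding F1 F2 P1 fa2 x2 K1 Q_def
    unfolding V1_def[symmetric] N2_def[symmetric] C1_def[symmetric] C2_def[symmetric] A1_def[symmetric] A2_def[symmetric] using nzA nzm nzM nzK nzf nzB by (simp add: field_simps)
  have T4: "2*x/\<mu> * ((\<nu>+2+ of_nat (Suc k))/(\<nu>+2) * (pochhammer (\<mu>+\<nu>+2) (2*Suc k)/(pochhammer (\<mu>+1) (Suc k) * pochhammer (\<mu>+\<nu>+2) (Suc k))) * (-x)^(Suc k)/fact (Suc k))
      = - (Q * (2*((\<nu>+2)+(K+1))*(c+3+2*K)/A1))"
    unfolding F3 F4 P2 fa1 x1 K1 Q_def
    unfolding V1_def[symmetric] N2_def[symmetric] C1_def[symmetric] C2_def[symmetric] A1_def[symmetric] A2_def[symmetric] using nzA nzm nzM nzK nzf nzB by (simp add: field_simps power2_eq_square)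
  have T5: "x^2/(\<mu>*(\<mu>+1)) * ((\<nu>+2+ of_nat k)/(\<nu>+2) * (pochhammer (\<mu>+\<nu>+3) (2*k)/(pochhammer (\<mu>+2) k * pochhammer (\<mu>+\<nu>+3) k)) * (-x)^k/fact k)
      = Q * (\<nu>+2+K)"
    unfolding F5 B_def[symmetric] M_def[symmetric] X_def[symmetric] K_def[symmetric] Q_def
    unfolding V1_def[symmetric] N2_def[symmetric] C1_def[symmetric] C2_def[symmetric]
    using nzA nzm nzM nzK nzf nzB by (simp add: field_simps)
  have polyraw: "(\<nu>+2)*(c+2+K)*(c+3+2*K) + (c+2+K)*U*A2
     = ((\<nu>+2)+(K+2))*(c+3+2*K)*(c+4+2*K) - 2*((\<nu>+2)+(K+1))*(c+3+2*K)*A2 + (\<nu>+2+K)*A2*A1"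
    unfolding A1_def A2_def U_def c_def by (simp add: algebra_simps)
  have l1: "(\<nu>+2)*(c+2+K)*(c+3+2*K)/(A2*A1) - (- ((c+2+K)*U/A1))
       = ((\<nu>+2)*(c+2+K)*(c+3+2*K) + (c+2+K)*U*A2) / (A2*A1)"
    using nzK by (simp add: field_simps)
  have l2: "((\<nu>+2)+(K+2))*(c+3+2*K)*(c+4+2*K)/(A2*A1) + - (2*((\<nu>+2)+(K+1))*(c+3+2*K)/A1) + (\<nu>+2+K)
       = (((\<nu>+2)+(K+2))*(c+3+2*K)*(c+4+2*K) - 2*((\<nu>+2)+(K+1))*(c+3+2*K)*A2 + (\<nu>+2+K)*A2*A1) / (A2*A1)"
    using nzK by (simp add: field_simps)
  have poly: "(\<nu>+2)*(c+2+K)*(c+3+2*K)/(A2*A1) - (- ((c+2+K)*U/A1))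
     = ((\<nu>+2)+(K+2))*(c+3+2*K)*(c+4+2*K)/(A2*A1) + - (2*((\<nu>+2)+(K+1))*(c+3+2*K)/A1) + (\<nu>+2+K)"
    unfolding l1 l2 polyraw ..
  show ?thesis unfolding T1 T2 T3 T4 T5
    using arg_cong[OF poly, of "\<lambda>t. Q * t"] by (simp add: algebra_simps)
qed



lemma case1:
  fixes \<mu> \<nu> x :: complex
  assumes mu: "\<And>k::nat. \<mu> \<noteq> - of_nat k"
      and munu: "\<And>k::nat. \<mu> + \<nu> + 1 \<noteq> - of_nat k"
      and nu2: "\<nu> + 2 \<noteq> 0"
  shows "(-x)^(Suc 0) * pochhammer (\<mu>+\<nu>+ of_nat (Suc 0)) (Suc 0) / (pochhammer \<mu> (Suc 0) * fact (Suc 0))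
     - 1/(\<nu>+2) * (x * ((-x)^0 * pochhammer (\<mu>+(\<nu>+1)+ of_nat 0) 0 / (pochhammer \<mu> 0 * fact 0)))
   = (\<nu>+2+ of_nat (Suc 0))/(\<nu>+2) * (pochhammer (\<mu>+\<nu>+1) (2*Suc 0) / (pochhammer \<mu> (Suc 0) * pochhammer (\<mu>+\<nu>+1) (Suc 0))) * (-x)^(Suc 0)/fact (Suc 0)
     + 2*x/\<mu> * ((\<nu>+2+ of_nat 0)/(\<nu>+2) * (pochhammer (\<mu>+\<nu>+2) (2*0)/(pochhammer (\<mu>+1) 0 * pochhammer (\<mu>+\<nu>+2) 0)) * (-x)^0/fact 0)"
proof -
  have nzm: "\<mu> \<noteq> 0" using mu[of 0] by simp
  have nzc: "\<mu>+\<nu>+1 \<noteq> 0" using munu[of 0] by simp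
  define N2 where "N2 = \<nu> + 2"
  define C1 where "C1 = \<mu>+\<nu>+1"
  have nz: "N2 \<noteq> 0" "C1 \<noteq> 0" using nu2 nzc by (simp_all add: N2_def C1_def)
  have p2: "pochhammer (\<mu>+\<nu>+1) (2*Suc 0) = C1 * (C1 + 1)"
    by (simp add: C1_def pochhammer_rec numeral_2_eq_2 algebra_simps)
  have p1: "pochhammer (\<mu>+\<nu>+1) (Suc 0) = C1" by (simp add: C1_def)
  have p1': "pochhammer (\<mu>+\<nu>+ of_nat (Suc 0)) (Suc 0) = C1" by (simp add: C1_def)
  have "(\<nu>+2+ of_nat (Suc 0)) = N2 + 1" by (simp add: N2_def)
  then show ?thesis unfolding p2 p1 p1'
    unfolding N2_def[symmetric]
    using nz nzm
    apply (simp add: field_simps)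
    apply (simp add: N2_def C1_def algebra_simps)
    done
qed



lemma nice2:
  fixes w p q aa bb bc x :: complex
  assumes "p = w/2 + 1/2" "q = w/2"
  shows "pochhammer aa k * pochhammer p k * pochhammer q k / (pochhammer bb k * pochhammer bc k * pochhammer w k) * (-4 * x)^k / fact k
       = pochhammer aa k / pochhammer bb k * (pochhammer w (2*k) / (pochhammer bc k * pochhammer w k)) * (-x)^k / fact k"
proof -
  have e: "pochhammer aa k * pochhammer p k * pochhammer q k = pochhammer aa k * pochhammer q k * pochhammer p k"
    by (simp add: mult_ac)
  show ?thesis unfolding e by (rule nice) (use assms in auto)
qed

lemma hterm_nice:
  fixes \<nu> :: complex
  assumes nu: "\<And>k::nat. \<nu> \<noteq> - of_nat (k + 1)"
      and pq: "(p = w/2 \<and> q = w/2 + 1/2) \<or> (p = w/2 + 1/2 \<and> q = w/2)"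
  shows "hterm (\<nu>+3) p q (\<nu>+2) b2 w (-4*x) k
       = (\<nu>+2+ of_nat k)/(\<nu>+2) * (pochhammer w (2*k) / (pochhammer b2 k * pochhammer w k)) * (-x)^k / fact k"
proof -
  have nu2: "\<nu>+2 \<noteq> 0" using nu[of 1] by (simp add: eq_neg_iff_add_eq_0)
  have pn: "pochhammer (\<nu>+2) k \<noteq> 0"
  proof (rule poch_nz)
    fix j :: nat
    show "\<nu> + 2 + of_nat j \<noteq> 0"
    proof
      assume "\<nu> + 2 + of_nat j = 0"
      then have "\<nu> = - of_nat (j + 1 + 1)" by (simp add: eq_neg_iff_add_eq_0 algebra_simps)
      with nu[of "j+1"] show False by simp
    qed
  qed
  have r: "pochhammer (\<nu>+3) k / pochhammer (\<nu>+2) k = (\<nu> + 2 + of_nat k) / (\<nu>+2)"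
    by (rule ratio32) (use pn nu2 in auto)
  show ?thesis using pq
  proof
    assume "p = w/2 \<and> q = w/2 + 1/2"
    then show ?thesis unfolding hterm_def using nice[where p=p and q=q and w=w and aa="\<nu>+3" and bb="\<nu>+2" and bc=b2 and x=x and k=k] r by simp
  next
    assume "p = w/2 + 1/2 \<and> q = w/2"
    then show ?thesis unfolding hterm_def using nice2[where p=p and q=q and w=w and aa="\<nu>+3" and bb="\<nu>+2" and bc=b2 and x=x and k=k] r by simp
  qed
qed



theorem mainTheorem10:
  fixes \<nu> \<mu> x :: complex
  assumes nu: "\<And>k::nat. \<nu> \<noteq> - of_nat (k + 1)"
      and mu: "\<And>k::nat. \<mu> \<noteq> - of_nat k"
      and munu: "\<And>k::nat. \<mu> + \<nu> + 1 \<noteq> - of_nat k"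
  shows "exp (- x) * (\<Sum>n. (- x) ^ n / pochhammer \<mu> n *
            (laguerre n \<nu> x - x / (\<nu> + 2) * laguerre n (\<nu> + 1) x))
         = hyp3F3 (\<nu> + 3) (\<mu>/2 + \<nu>/2 + 1) (\<mu>/2 + \<nu>/2 + 1/2) (\<nu> + 2) \<mu> (\<mu> + \<nu> + 1) (-4 * x)
           + 2 * x / \<mu> * hyp3F3 (\<nu> + 3) (\<mu>/2 + \<nu>/2 + 1) (\<mu>/2 + \<nu>/2 + 3/2) (\<nu> + 2) (\<mu> + 1) (\<mu> + \<nu> + 2) (-4 * x)
           + x ^ 2 / (\<mu> * (\<mu> + 1)) * hyp3F3 (\<nu> + 3) (\<mu>/2 + \<nu>/2 + 2) (\<mu>/2 + \<nu>/2 + 3/2) (\<nu> + 2) (\<mu> + 2) (\<mu> + \<nu> + 3) (-4 * x)"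
proof -
  have nu1: "\<And>k::nat. \<nu> + 1 \<noteq> - of_nat (k + 1)"
  proof
    fix k :: nat assume "\<nu> + 1 = - of_nat (k + 1)"
    then have "\<nu> = - of_nat (k + 1 + 1)" by (simp add: eq_neg_iff_add_eq_0 algebra_simps)
    with nu[of "k+1"] show False by simp
  qed
  have nu2: "\<nu> + 2 \<noteq> 0" using nu[of 1] by (simp add: eq_neg_iff_add_eq_0)
  define e where "e \<alpha> m = (-x)^m * pochhammer (\<mu>+\<alpha>+ of_nat m) m / (pochhammer \<mu> m * fact m)" for \<alpha> m
  obtain S0 where S0: "(\<lambda>n. exp (-x) * ((-x)^n / pochhammer \<mu> n * laguerre n \<nu> x)) sums S0" "e \<nu> sums S0"
    using double_series[OF nu mu, of x] unfolding e_def by blast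
  obtain S1 where S1: "(\<lambda>n. exp (-x) * ((-x)^n / pochhammer \<mu> n * laguerre n (\<nu>+1) x)) sums S1" "e (\<nu>+1) sums S1"
    using double_series[OF nu1 mu, of x] unfolding e_def by blast
  define f where "f n = (- x) ^ n / pochhammer \<mu> n * (laguerre n \<nu> x - x / (\<nu> + 2) * laguerre n (\<nu> + 1) x)" for n
  have "(\<lambda>n. exp (-x) * ((-x)^n / pochhammer \<mu> n * laguerre n \<nu> x) - x / (\<nu>+2) * (exp (-x) * ((-x)^n / pochhammer \<mu> n * laguerre n (\<nu>+1) x)))
        sums (S0 - x/(\<nu>+2) * S1)"
    by (intro sums_diff sums_mult S0(1) S1(1))
  moreover have "(\<lambda>n. exp (-x) * ((-x)^n / pochhammer \<mu> n * laguerre n \<nu> x) - x / (\<nu>+2) * (exp (-x) * ((-x)^n / pochhammer \<mu> n * laguerre n (\<nu>+1) x)))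
        = (\<lambda>n. exp (-x) * f n)"
    by (simp add: f_def fun_eq_iff algebra_simps)
  ultimately have ef: "(\<lambda>n. exp (-x) * f n) sums (S0 - x/(\<nu>+2) * S1)" by simp
  have "(\<lambda>n. inverse (exp (-x)) * (exp (-x) * f n)) sums (inverse (exp (-x)) * (S0 - x/(\<nu>+2) * S1))"
    by (rule sums_mult[OF ef])
  moreover have "(\<lambda>n. inverse (exp (-x)) * (exp (-x) * f n)) = f"
  proof
    fix n
    have "exp (-x) \<noteq> 0" by simp
    then show "inverse (exp (-x)) * (exp (-x) * f n) = f n" by (simp only: mult.assoc[symmetric] left_inverse) simp
  qed
  ultimately have "f sums (inverse (exp (-x)) * (S0 - x/(\<nu>+2) * S1))" by simp
  then have LHS: "exp (-x) * suminf f = S0 - x/(\<nu>+2) * S1" by (simp add: sums_iff)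
  define l where "l m = e \<nu> m - 1/(\<nu>+2) * (if m = 0 then 0 else x * e (\<nu>+1) (m - 1))" for m
  have ls: "l sums (S0 - x/(\<nu>+2) * S1)"
  proof -
    have "(\<lambda>k. x * e (\<nu>+1) k) sums (x * S1)" by (rule sums_mult[OF S1(2)])
    then have "(\<lambda>m. if m = 0 then 0 else x * e (\<nu>+1) (m - 1)) sums (x * S1)" by (rule shift_sums)
    then have "(\<lambda>m. 1/(\<nu>+2) * (if m = 0 then 0 else x * e (\<nu>+1) (m - 1))) sums (1/(\<nu>+2) * (x * S1))"
      by (rule sums_mult)
    then have "l sums (S0 - 1/(\<nu>+2) * (x * S1))" unfolding l_def by (rule sums_diff[OF S0(2)])
    then show ?thesis by simp
  qed
  define h1 where "h1 = hterm (\<nu> + 3) (\<mu>/2 + \<nu>/2 + 1) (\<mu>/2 + \<nu>/2 + 1/2) (\<nu> + 2) \<mu> (\<mu> + \<nu> + 1) (-4 * x)"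
  define h2 where "h2 = hterm (\<nu> + 3) (\<mu>/2 + \<nu>/2 + 1) (\<mu>/2 + \<nu>/2 + 3/2) (\<nu> + 2) (\<mu> + 1) (\<mu> + \<nu> + 2) (-4 * x)"
  define h3 where "h3 = hterm (\<nu> + 3) (\<mu>/2 + \<nu>/2 + 2) (\<mu>/2 + \<nu>/2 + 3/2) (\<nu> + 2) (\<mu> + 2) (\<mu> + \<nu> + 3) (-4 * x)"
  have bnu: "\<nu> + 2 + of_nat k \<noteq> 0" for k
  proof
    assume "\<nu> + 2 + of_nat k = 0"
    then have "\<nu> = - of_nat (k + 1 + 1)" by (simp add: eq_neg_iff_add_eq_0 algebra_simps)
    with nu[of "k+1"] show False by simp
  qed
  have bmu: "\<mu> + of_nat s + of_nat k \<noteq> 0" for s k by (rule shift_nz[OF mu])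
  have bmunu: "\<mu> + \<nu> + 1 + of_nat s + of_nat k \<noteq> 0" for s k by (rule shift_nz[OF munu])
  have bmu0: "\<mu> + of_nat k \<noteq> 0" for k using bmu[of 0 k] by simp
  have bmu1: "\<mu> + 1 + of_nat k \<noteq> 0" for k using bmu[of 1 k] by simp
  have bmu2: "\<mu> + 2 + of_nat k \<noteq> 0" for k using bmu[of 2 k] by simp
  have bmn1: "\<mu> + \<nu> + 1 + of_nat k \<noteq> 0" for k using bmunu[of 0 k] by simp
  have bmn2: "\<mu> + \<nu> + 2 + of_nat k \<noteq> 0" for k using bmunu[of 1 k] by (simp add: algebra_simps)
  have bmn3: "\<mu> + \<nu> + 3 + of_nat k \<noteq> 0" for k using bmunu[of 2 k] by (simp add: algebra_simps)
  have H1: "h1 sums hyp3F3 (\<nu> + 3) (\<mu>/2 + \<nu>/2 + 1) (\<mu>/2 + \<nu>/2 + 1/2) (\<nu> + 2) \<mu> (\<mu> + \<nu> + 1) (-4 * x)"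
    unfolding h1_def by (rule hterm_sums[OF bnu bmu0 bmn1])
  have H2: "h2 sums hyp3F3 (\<nu> + 3) (\<mu>/2 + \<nu>/2 + 1) (\<mu>/2 + \<nu>/2 + 3/2) (\<nu> + 2) (\<mu> + 1) (\<mu> + \<nu> + 2) (-4 * x)"
    unfolding h2_def by (rule hterm_sums[OF bnu bmu1 bmn2])
  have H3: "h3 sums hyp3F3 (\<nu> + 3) (\<mu>/2 + \<nu>/2 + 2) (\<mu>/2 + \<nu>/2 + 3/2) (\<nu> + 2) (\<mu> + 2) (\<mu> + \<nu> + 3) (-4 * x)"
    unfolding h3_def by (rule hterm_sums[OF bnu bmu2 bmn3])
  define r where "r m = h1 m + (if m = 0 then 0 else 2 * x / \<mu> * h2 (m - 1))
      + (if m = 0 then 0 else (if m - 1 = 0 then 0 else x ^ 2 / (\<mu> * (\<mu> + 1)) * h3 (m - 1 - 1)))" for m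
  have rs: "r sums (hyp3F3 (\<nu> + 3) (\<mu>/2 + \<nu>/2 + 1) (\<mu>/2 + \<nu>/2 + 1/2) (\<nu> + 2) \<mu> (\<mu> + \<nu> + 1) (-4 * x)
           + 2 * x / \<mu> * hyp3F3 (\<nu> + 3) (\<mu>/2 + \<nu>/2 + 1) (\<mu>/2 + \<nu>/2 + 3/2) (\<nu> + 2) (\<mu> + 1) (\<mu> + \<nu> + 2) (-4 * x)
           + x ^ 2 / (\<mu> * (\<mu> + 1)) * hyp3F3 (\<nu> + 3) (\<mu>/2 + \<nu>/2 + 2) (\<mu>/2 + \<nu>/2 + 3/2) (\<nu> + 2) (\<mu> + 2) (\<mu> + \<nu> + 3) (-4 * x))"
    unfolding r_def
    by (intro sums_add H1 shift_sums sums_mult H2 H3)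
  define Nf where "Nf w b2 k = (\<nu>+2+ of_nat k)/(\<nu>+2) * (pochhammer w (2*k) / (pochhammer b2 k * pochhammer w k)) * (-x)^k / fact k"
    for w b2 :: complex and k :: nat
  have h1n: "h1 k = Nf (\<mu>+\<nu>+1) \<mu> k" for k
    unfolding h1_def Nf_def by (rule hterm_nice[OF nu]) (auto simp: field_simps)
  have h2n: "h2 k = Nf (\<mu>+\<nu>+2) (\<mu>+1) k" for k
    unfolding h2_def Nf_def by (rule hterm_nice[OF nu]) (auto simp: field_simps)
  have h3n: "h3 k = Nf (\<mu>+\<nu>+3) (\<mu>+2) k" for k
    unfolding h3_def Nf_def by (rule hterm_nice[OF nu]) (auto simp: field_simps)
  have lr: "l m = r m" for m
  proof (cases m)
    case 0
    then show ?thesis by (simp add: l_def r_def e_def h1_def hterm_def)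
  next
    case (Suc m')
    show ?thesis
    proof (cases m')
      case 0
      then show ?thesis using Suc case1[OF mu munu nu2, of x]
        by (simp add: l_def r_def e_def h1n h2n Nf_def del: of_nat_Suc)
    next
      case (Suc k)
      then show ?thesis using \<open>m = Suc m'\<close> gen_case[OF mu munu nu2, of x k]
        by (simp add: l_def r_def e_def h1n h2n h3n Nf_def del: of_nat_Suc)
    qed
  qed
  have "l = r" using lr by (simp add: fun_eq_iff)
  then have "S0 - x/(\<nu>+2) * S1 = hyp3F3 (\<nu> + 3) (\<mu>/2 + \<nu>/2 + 1) (\<mu>/2 + \<nu>/2 + 1/2) (\<nu> + 2) \<mu> (\<mu> + \<nu> + 1) (-4 * x)
           + 2 * x / \<mu> * hyp3F3 (\<nu> + 3) (\<mu>/2 + \<nu>/2 + 1) (\<mu>/2 + \<nu>/2 + 3/2) (\<nu> + 2) (\<mu> + 1) (\<mu> + \<nu> + 2) (-4 * x)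
           + x ^ 2 / (\<mu> * (\<mu> + 1)) * hyp3F3 (\<nu> + 3) (\<mu>/2 + \<nu>/2 + 2) (\<mu>/2 + \<nu>/2 + 3/2) (\<nu> + 2) (\<mu> + 2) (\<mu> + \<nu> + 3) (-4 * x)"
    using ls rs sums_unique2 by metis
  then show ?thesis using LHS unfolding f_def by simp
qed


end
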